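(* Let $n\ge1$ and $z\in\{1,\dots,n+1\}$. Let $v_{n,z}=(a_1,\dots,a_n)$ with $a_i=z+1-i$ for $i<z$ and $a_i=1$ for $i\ge z$, and $v^{n,z}=(b_1,\dots,b_n)$ with $b_i=1$ for $i<z$ and $b_i=i+2-z$ for $i\ge z$. Then $v_{n,z}$ and $v^{n,z}$ realize the same triangulation except for one anti-clockwise rotation: the triangulation $F(v^{n,z})$ is obtained from $F(v_{n,z})$ by replacing every vertex label $l$ by $l-1$ (and the label $0$ by $n+2$).
   Context: A Dyck path of length $2N$ is a word in $U,D$ with $N$ of each letter such that every prefix has at least as many $U$'s as $D$'s; $\mathfrak{D}_{2N}$ is their set. For $G\in\mathfrak{D}_{2(n+1)}$ let $m_i$ be the number of $U$'s before the $i$-th $D$; $G$ is encoded by $v_G=(m_1-0,m_2-1,\dots,m_n-(n-1))$. For $u=(u_1,\dots,u_m)\in\mathbb{N}^m$ and $1\le i\le m$, $T_i(u)$ is defined by: $r_0=u_i$; while some $l\in\{1,\dots,i\}$ has $r_k-u_l>0$, let $l_k$ be the largest such $l$ and $r_{k+1}=r_k-u_{l_k}$; if this stops at $r_t$ after $t\ge0$ steps, $T_i(u)=r_t+t$. For $u\in\mathbb{N}^n$, $f(u)$ is the Dyck path $G\in\mathfrak{D}_{2(n+1)}$ with $v_G=(T_1(u),\dots,T_n(u))$. For $G\in\mathfrak{D}_{2(n+1)}$ let $\lambda_G=(\lambda_1,\dots,\lambda_n)$, where $\lambda_i$ is the number of $D$'s before the $(n+2-i)$-th $U$ in $G$. The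 triangulation $g(G)$ of the polygon with vertices labelled $0,1,\dots,n+2$ is built as follows: for $i=1,\dots,n$, in the current polygon (with $n+4-i$ vertices labelled consecutively $0,1,\dots,n+3-i$) draw the diagonal between the vertices labelled $\lambda_i$ and $\lambda_i+2$, delete the vertex labelled $\lambda_i+1$ (cutting off a triangle), and relabel the remaining polygon consecutively: vertices with label $\le\lambda_i$ keep their labels, and each vertex with label $j+1>\lambda_i+1$ receives label $j$. The drawn diagonals, expressed in the original labels $0,\dots,n+2$, form $g(G)$. Finally $F=g\circ f$. Example: $G=UDUDUUDD$ ($n=3$) has $\lambda_G=(2,2,1)$ and $g(G)=\{\{2,4\},\{2,5\},\{1,5\}\}$. *)

theory Defs
  imports Main "HOL-Library.While_Combinator"
begin

text \<open>Words in U,D are boolean lists: True = U, False = D. Positions are 0-based,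
  the paper's indices (i-th D, i-th U, T_i, ...) are 1-based.\<close>

definition dyck :: "nat \<Rightarrow> bool list \<Rightarrow> bool" where
  "dyck N w \<longleftrightarrow> length w = 2 * N \<and> count_list w True = N \<and> count_list w False = N \<and>
     (\<forall>k \<le> length w. count_list (take k w) False \<le> count_list (take k w) True)"

definition ups_before_D :: "bool list \<Rightarrow> nat \<Rightarrow> nat" where
  "ups_before_D w i = count_list (take ([p \<leftarrow> [0..<length w]. \<not> w ! p] ! (i - 1)) w) True"

definition vG :: "nat \<Rightarrow> bool list \<Rightarrow> nat list" where
  "vG n w = map (\<lambda>i. ups_before_D w i - (i - 1)) [1..<n+1]"

text \<open>The operator T_i on u = (u_1,...,u_m) (u_l = u ! (l-1)), computed by the
  literal while-loop on states (r_k, k).\<close>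
definition T_op :: "nat \<Rightarrow> nat list \<Rightarrow> nat" where
  "T_op i u = (case the (while_option
       (\<lambda>(r, t). \<exists>l \<in> {1..i}. r > u ! (l - 1))
       (\<lambda>(r, t). (r - u ! ((GREATEST l. l \<in> {1..i} \<and> r > u ! (l - 1)) - 1), Suc t))
       (u ! (i - 1), 0::nat)) of (r, t) \<Rightarrow> r + t)"

definition f_map :: "nat list \<Rightarrow> bool list" where
  "f_map u = (THE G. dyck (length u + 1) G \<and> vG (length u) G = map (\<lambda>i. T_op i u) [1..<length u + 1])"

definition Ds_before_U :: "bool list \<Rightarrow> nat \<Rightarrow> nat" where
  "Ds_before_U w k = count_list (take ([p \<leftarrow> [0..<length w]. w ! p] ! (k - 1)) w) False"

definition lambdaG :: "nat \<Rightarrow> bool list \<Rightarrow> nat list" where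
  "lambdaG n w = map (\<lambda>i. Ds_before_U w (n + 2 - i)) [1..<n+1]"

text \<open>One step of g: the state is (diagonals drawn so far, list of original labels of the
  current polygon, indexed by current labels).\<close>
definition g_step :: "nat \<Rightarrow> nat set set \<times> nat list \<Rightarrow> nat set set \<times> nat list" where
  "g_step l st = (case st of (D, cur) \<Rightarrow>
     (insert {cur ! l, cur ! (l + 2)} D, take (l + 1) cur @ drop (l + 2) cur))"

definition g_map :: "nat \<Rightarrow> bool list \<Rightarrow> nat set set" where
  "g_map n w = fst (fold g_step (lambdaG n w) ({}, [0..<n+3]))"

definition F_map :: "nat list \<Rightarrow> nat set set" where
  "F_map u = g_map (length u) (f_map u)"

definition v_low :: "nat \<Rightarrow> nat \<Rightarrow> nat list" where
  "v_low n z = map (\<lambda>i. if i < z then z + 1 - i else 1) [1..<n+1]"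

definition v_up :: "nat \<Rightarrow> nat \<Rightarrow> nat list" where
  "v_up n z = map (\<lambda>i. if i < z then 1 else i + 2 - z) [1..<n+1]"

definition rot_label :: "nat \<Rightarrow> nat \<Rightarrow> nat" where
  "rot_label n l = (if l = 0 then n + 2 else l - 1)"

end

theory Submission
  imports Defs
begin


definition posl :: "bool \<Rightarrow> bool list \<Rightarrow> nat list" where
  "posl c w = [p \<leftarrow> [0..<length w]. w ! p = c]"

definition bef :: "bool \<Rightarrow> bool \<Rightarrow> bool list \<Rightarrow> nat \<Rightarrow> nat" where
  "bef c d w i = count_list (take (posl c w ! (i - 1)) w) d"

lemma ups_bef: "ups_before_D w i = bef False True w i"
  unfolding ups_before_D_def bef_def posl_def by (simp)

lemma Ds_bef: "Ds_before_U w i = bef True False w i"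
  unfolding Ds_before_U_def bef_def posl_def by (simp)

lemma posl_Cons: "posl c (x # w) = (if x = c then [0] else []) @ map Suc (posl c w)"
  unfolding posl_def
  by (simp add: upt_conv_Cons map_Suc_upt[symmetric] filter_map o_def del: upt_Suc)

lemma posl_Nil[simp]: "posl c [] = []" by (simp add: posl_def)

lemma posl_append: "posl c (xs @ ys) = posl c xs @ map (\<lambda>p. p + length xs) (posl c ys)"
  by (induction xs) (auto simp: posl_Cons o_def)

lemma length_posl[simp]: "length (posl c w) = count_list w c"
  by (induction w) (auto simp: posl_Cons)

lemma posl_lt: "p \<in> set (posl c w) \<Longrightarrow> p < length w"
  by (simp add: posl_def)

lemma bef_app1:
  assumes "1 \<le> i" "i \<le> count_list xs c"
  shows "bef c d (xs @ ys) i = bef c d xs i"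
proof -
  have i: "i - 1 < length (posl c xs)" using assms by simp
  have "posl c xs ! (i - 1) < length xs" using posl_lt nth_mem[OF i] by blast
  then show ?thesis using i unfolding bef_def posl_append by (simp add: nth_append)
qed

lemma bef_app2:
  assumes "count_list xs c < i" "i - count_list xs c \<le> count_list ys c"
  shows "bef c d (xs @ ys) i = count_list xs d + bef c d ys (i - count_list xs c)"
proof -
  have i: "i - 1 - length (posl c xs) < length (posl c ys)" using assms by simp
  have e: "i - 1 - count_list xs c = i - count_list xs c - 1" by simp
  show ?thesis using i assms unfolding bef_def posl_append
    by (simp add: nth_append e)
qed

lemma bef_rep: "c \<noteq> d \<Longrightarrow> bef c d (replicate m c) i = 0"
  unfolding bef_def by (simp add: count_list_0_iff)

lemma bef_single: "bef c d [c] (Suc 0) = 0"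
  unfolding bef_def by (simp add: posl_Cons)

lemma bef_cc: "j < count_list w c \<Longrightarrow> bef c c w (Suc j) = j"
proof (induction w arbitrary: j)
  case Nil then show ?case by simp
next
  case (Cons x w)
  show ?case
  proof (cases "x = c")
    case True
    show ?thesis
    proof (cases j)
      case 0 then show ?thesis using True bef_app1[of 1 "[x]" c c w] by (simp add: bef_single)
    next
      case (Suc k)
      then show ?thesis using True Cons bef_app2[of "[x]" c "Suc j" w c] by simp
    qed
  next
    case False
    then show ?thesis using Cons bef_app2[of "[x]" c "Suc j" w c] by simp
  qed
qed



definition pok :: "int \<Rightarrow> bool list \<Rightarrow> bool" where
  "pok d w = (\<forall>k \<le> length w. int (count_list (take k w) False) \<le> int (count_list (take k w) True) + d)"

lemma pok_Nil[simp]: "pok d [] \<longleftrightarrow> 0 \<le> d"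
  by (simp add: pok_def)

lemma pok_Cons[simp]: "pok d (x # w) \<longleftrightarrow> 0 \<le> d \<and> pok (d + (if x then 1 else -1)) w"
proof
  assume a: "pok d (x # w)"
  have "0 \<le> d" using a[unfolded pok_def, rule_format, of 0] by simp
  moreover have "pok (d + (if x then 1 else -1)) w"
    unfolding pok_def
  proof (intro allI impI)
    fix k assume "k \<le> length w"
    then have "Suc k \<le> length (x # w)" by simp
    from a[unfolded pok_def, rule_format, OF this] show
      "int (count_list (take k w) False) \<le> int (count_list (take k w) True) + (d + (if x then 1 else -1))"
      by (cases x) auto
  qed
  ultimately show "0 \<le> d \<and> pok (d + (if x then 1 else -1)) w" by blast
next
  assume a: "0 \<le> d \<and> pok (d + (if x then 1 else -1)) w"
  show "pok d (x # w)" unfolding pok_def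
  proof (intro allI impI)
    fix k assume k: "k \<le> length (x # w)"
    show "int (count_list (take k (x # w)) False) \<le> int (count_list (take k (x # w)) True) + d"
    proof (cases k)
      case 0 then show ?thesis using a by simp
    next
      case (Suc k')
      then have "k' \<le> length w" using k by simp
      from a[THEN conjunct2, unfolded pok_def, rule_format, OF this] show ?thesis
        using Suc by (cases x) auto
    qed
  qed
qed

lemma pok_nonneg: "pok d w \<Longrightarrow> 0 \<le> d"
  unfolding pok_def by (metis le0 take0 count_list.simps(1) add_0 of_nat_0)

lemma pok_append[simp]: "pok d (xs @ ys) \<longleftrightarrow> pok d xs \<and> pok (d + int (count_list xs True) - int (count_list xs False)) ys"
  by (induction xs arbitrary: d) (auto simp: algebra_simps dest: pok_nonneg)

lemma pok_repT[simp]: "pok d (replicate m True) \<longleftrightarrow> 0 \<le> d"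
  by (induction m arbitrary: d) (simp, simp only: replicate_Suc pok_Cons, arith)

lemma pok_repF[simp]: "pok d (replicate m False) \<longleftrightarrow> int m \<le> d"
  by (induction m arbitrary: d) (simp, simp only: replicate_Suc pok_Cons if_False, simp, arith)

lemma cnt_TF[simp]: "count_list (concat (replicate k [True, False])) b = k"
  by (induction k) (simp_all, cases b, simp_all)

lemma pok_TF[simp]: "pok d (concat (replicate k [True, False])) \<longleftrightarrow> 0 \<le> d"
  by (induction k arbitrary: d) (simp, simp only: replicate_Suc concat.simps append.simps pok_Cons if_False if_True, simp, arith)

lemma dyck_pok: "dyck N w \<longleftrightarrow> length w = 2 * N \<and> count_list w True = N \<and> count_list w False = N \<and> pok 0 w"
  unfolding dyck_def pok_def by auto

lemma len_cnt: "length w = count_list w True + count_list w False"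
  by (induction w) auto

lemma dyck_last: assumes "dyck N w" "1 \<le> N" shows "last w = False"
proof (rule ccontr)
  assume l: "last w \<noteq> False"
  have ne: "w \<noteq> []" using assms unfolding dyck_def by auto
  then have w: "w = butlast w @ [True]" using l by (metis append_butlast_last_id)
  have p: "pok 0 w" and c: "count_list w True = N" "count_list w False = N" using assms(1) by (auto simp: dyck_pok)
  have c1: "count_list (butlast w @ [True]) True = N" "count_list (butlast w @ [True]) False = N"
    using c w by metis+
  have "pok 0 (butlast w @ [True])" using p w by metis
  then have "0 \<le> int (count_list (butlast w) True) - int (count_list (butlast w) False)"
    by simp
  then show False using c1 by simp
qed

lemma bef_Cons1: "bef c d (c # w) (Suc 0) = 0"
  using bef_app1[of "Suc 0" "[c]" c d w] by (simp add: bef_single)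

lemma bef_Cons2: "1 \<le> j \<Longrightarrow> j \<le> count_list w c \<Longrightarrow>
   bef c d (c # w) (Suc j) = (if c = d then 1 else 0) + bef c d w j"
  using bef_app2[of "[c]" c "Suc j" w d] by simp

lemma bef_Cons3: "x \<noteq> c \<Longrightarrow> 1 \<le> i \<Longrightarrow> i \<le> count_list w c \<Longrightarrow>
   bef c d (x # w) i = (if x = d then 1 else 0) + bef c d w i"
  using bef_app2[of "[x]" c i w d] by simp

lemma last_F_cnt: "w \<noteq> [] \<Longrightarrow> last w = False \<Longrightarrow> 1 \<le> count_list w False"
  by (metis count_list_0_iff last_in_set less_one not_le)

lemma det:
  "count_list w1 False = count_list w2 False \<Longrightarrow> count_list w1 True = count_list w2 True \<Longrightarrow>
   (\<forall>i. 1 \<le> i \<longrightarrow> i < count_list w1 False \<longrightarrow> bef False True w1 i = bef False True w2 i) \<Longrightarrow>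
   (w1 \<noteq> [] \<longrightarrow> last w1 = False) \<Longrightarrow> (w2 \<noteq> [] \<longrightarrow> last w2 = False) \<Longrightarrow> w1 = w2"
proof (induction w1 arbitrary: w2)
  case Nil
  then show ?case using len_cnt[of w2] by simp
next
  case (Cons x w1)
  then obtain y w2' where w2: "w2 = y # w2'"
    by (cases w2) (auto split: if_splits)
  have L1: "w1 \<noteq> [] \<longrightarrow> last w1 = False" using Cons.prems(4) by auto
  have L2: "w2' \<noteq> [] \<longrightarrow> last w2' = False" using Cons.prems(5) w2 by auto
  show ?case
  proof (cases x; cases y)
    assume xy: "x" "y"
    have "w1 = w2'"
    proof (rule Cons.IH)
      show "count_list w1 False = count_list w2' False" "count_list w1 True = count_list w2' True"
        using Cons.prems(1,2) w2 xy by auto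
      show "\<forall>i. 1 \<le> i \<longrightarrow> i < count_list w1 False \<longrightarrow> bef False True w1 i = bef False True w2' i"
      proof (intro allI impI)
        fix i assume i: "1 \<le> i" "i < count_list w1 False"
        have c: "count_list w1 False = count_list w2' False" using Cons.prems(1) w2 xy by auto
        have "bef False True (x # w1) i = bef False True w2 i" using Cons.prems(3) i xy by auto
        then show "bef False True w1 i = bef False True w2' i"
          using bef_Cons3[of True False i w1 True] bef_Cons3[of True False i w2' True] i c xy w2 by simp
      qed
    qed (use L1 L2 in auto)
    then show ?thesis using xy w2 by simp
  next
    assume xy: "\<not> x" "\<not> y"
    have "w1 = w2'"
    proof (rule Cons.IH)
      show c: "count_list w1 False = count_list w2' False" "count_list w1 True = count_list w2' True"
        using Cons.prems(1,2) w2 xy by auto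
      show "\<forall>i. 1 \<le> i \<longrightarrow> i < count_list w1 False \<longrightarrow> bef False True w1 i = bef False True w2' i"
      proof (intro allI impI)
        fix i assume i: "1 \<le> i" "i < count_list w1 False"
        have "bef False True (x # w1) (Suc i) = bef False True w2 (Suc i)" using Cons.prems(3) i xy by auto
        then show "bef False True w1 i = bef False True w2' i"
          using bef_Cons2[of i w1 False True] bef_Cons2[of i w2' False True] i c xy w2 by simp
      qed
    qed (use L1 L2 in auto)
    then show ?thesis using xy w2 by simp
  next
    assume xy: "x" "\<not> y"
    show ?thesis
    proof (cases "count_list w2' False")
      case 0
      then have "w2' = []" using L2 last_F_cnt by fastforce
      then show ?thesis using Cons.prems(2) w2 xy by simp
    next
      case (Suc m)
      then have c: "count_list w1 False = Suc (Suc m)" using Cons.prems(1) w2 xy by simp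
      have "bef False True (x # w1) 1 = bef False True w2 1" using Cons.prems(3) xy c by auto
      moreover have "bef False True (x # w1) 1 = 1 + bef False True w1 1"
        using bef_Cons3[of True False 1 w1 True] xy c by simp
      moreover have "bef False True w2 1 = 0" using w2 xy bef_Cons1 by simp
      ultimately show ?thesis by simp
    qed
  next
    assume xy: "\<not> x" "y"
    show ?thesis
    proof (cases "count_list w1 False")
      case 0
      then have "w1 = []" using L1 last_F_cnt by fastforce
      then show ?thesis using Cons.prems(2) w2 xy by simp
    next
      case (Suc m)
      then have c: "count_list w2' False = Suc (Suc m)" using Cons.prems(1) w2 xy by simp
      have "bef False True (x # w1) 1 = bef False True w2 1" using Cons.prems(3) xy Suc by auto
      moreover have "bef False True w2 1 = 1 + bef False True w2' 1"
        using bef_Cons3[of True False 1 w2' True] xy c w2 by simp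
      moreover have "bef False True (x # w1) 1 = 0" using xy bef_Cons1 by simp
      ultimately show ?thesis by simp
    qed
  qed
qed



lemma cnt_rep[simp]: "count_list (replicate m x) y = (if x = y then m else 0)"
  by (induction m) auto

lemma T_stop:
  assumes "\<forall>l\<in>{1..i}. \<not> u ! (i - 1) > u ! (l - 1)"
  shows "T_op i u = u ! (i - 1)"
  unfolding T_op_def using assms
  by (subst while_option_unfold) simp

lemma T_one:
  assumes "g \<in> {1..i}" "u ! (i - 1) > u ! (g - 1)"
    "\<And>l. l \<in> {1..i} \<Longrightarrow> u ! (i - 1) > u ! (l - 1) \<Longrightarrow> l \<le> g"
    "\<forall>l\<in>{1..i}. \<not> u ! (i - 1) - u ! (g - 1) > u ! (l - 1)"
  shows "T_op i u = u ! (i - 1) - u ! (g - 1) + 1"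
proof -
  have G: "(GREATEST l. l \<in> {1..i} \<and> u ! (i - 1) > u ! (l - 1)) = g"
    using assms(1,2,3) by (intro Greatest_equality) auto
  define B where "B = (\<lambda>(r, t::nat). \<exists>l \<in> {1..i}. r > u ! (l - 1))"
  define C where "C = (\<lambda>(r, t). (r - u ! ((GREATEST l. l \<in> {1..i} \<and> r > u ! (l - 1)) - 1), Suc t))"
  have T: "T_op i u = (case the (while_option B C (u ! (i - 1), 0)) of (r, t) \<Rightarrow> r + t)"
    unfolding T_op_def B_def C_def by (rule refl)
  have C0: "C (u ! (i - 1), 0) = (u ! (i - 1) - u ! (g - 1), 1)"
    unfolding C_def prod.case G by simp
  have B0: "B (u ! (i - 1), 0)" unfolding B_def using assms by auto
  have B1: "\<not> B (u ! (i - 1) - u ! (g - 1), 1)" unfolding B_def using assms(4) by auto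
  have "while_option B C (u ! (i - 1), 0) = while_option B C (C (u ! (i - 1), 0))"
    using B0 by (subst while_option_unfold) simp
  also have "\<dots> = Some (u ! (i - 1) - u ! (g - 1), 1)"
    unfolding C0 using B1 by (subst while_option_unfold) simp
  finally show ?thesis using T by simp
qed

lemma vlow_nth: "1 \<le> l \<Longrightarrow> l \<le> n \<Longrightarrow> v_low n z ! (l - Suc 0) = (if l < z then z + 1 - l else 1)"
  unfolding v_low_def by (simp del: upt_Suc)

lemma vup_nth: "1 \<le> l \<Longrightarrow> l \<le> n \<Longrightarrow> v_up n z ! (l - Suc 0) = (if l < z then 1 else l + 2 - z)"
  unfolding v_up_def by (simp del: upt_Suc)

lemma T_low: assumes "1 \<le> i" "i \<le> n"
  shows "T_op i (v_low n z) = (if i < z then z + 1 - i else 1)"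
proof -
  have "\<forall>l\<in>{1..i}. \<not> v_low n z ! (i - 1) > v_low n z ! (l - 1)"
    using assms by (auto simp: vlow_nth)
  then have "T_op i (v_low n z) = v_low n z ! (i - 1)" by (rule T_stop)
  then show ?thesis using assms by (simp add: vlow_nth)
qed

lemma T_up: assumes "1 \<le> i" "i \<le> n" "1 \<le> z"
  shows "T_op i (v_up n z) = (if i < z then 1 else 2)"
proof (cases "i < z \<or> i = 1")
  case True
  have "\<forall>l\<in>{1..i}. \<not> v_up n z ! (i - 1) > v_up n z ! (l - 1)"
    using assms True by (auto simp: vup_nth)
  then have "T_op i (v_up n z) = v_up n z ! (i - 1)" using T_stop by metis
  then show ?thesis using assms True by (auto simp: vup_nth)
next
  case False
  let ?u = "v_up n z"
  have a: "?u ! (i - Suc 0) = i + 2 - z" using vup_nth[of i n z] False assms by simp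
  have b: "?u ! (i - Suc (Suc 0)) = (if i - 1 < z then 1 else i + 1 - z)"
    using vup_nth[of "i - 1" n z] False assms by (simp add: numeral_2_eq_2 Suc_le_eq)
  have "T_op i ?u = ?u ! (i - 1) - ?u ! (i - 1 - 1) + 1"
  proof (rule T_one)
    show "i - 1 \<in> {1..i}" using False assms by auto
    show "?u ! (i - 1) > ?u ! (i - 1 - 1)" using False assms by (auto simp: vup_nth a b)
    show "\<And>l. l \<in> {1..i} \<Longrightarrow> ?u ! (i - 1) > ?u ! (l - 1) \<Longrightarrow> l \<le> i - 1"
      using False assms by (auto simp: vup_nth a b split: if_splits)
    show "\<forall>l\<in>{1..i}. \<not> ?u ! (i - 1) - ?u ! (i - 1 - 1) > ?u ! (l - 1)"
      using False assms by (auto simp: vup_nth a b)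
  qed
  then show ?thesis using False assms by (auto simp: vup_nth a b)
qed



abbreviation TF :: "nat \<Rightarrow> bool list" where
  "TF k \<equiv> concat (replicate k [True, False])"

definition Wl :: "nat \<Rightarrow> nat \<Rightarrow> bool list" where
  "Wl n z = replicate z True @ replicate z False @ TF (n + 1 - z)"

definition Wu :: "nat \<Rightarrow> nat \<Rightarrow> bool list" where
  "Wu n z = TF (z - 1) @ [True] @ TF (n + 1 - z) @ [False]"

lemma bef_small:
  "bef False True [True, False] (Suc 0) = 1" "bef True False [True, False] (Suc 0) = 0"
  "bef False True [True, True, False] (Suc 0) = 2"
  "bef True False [True, True, False] (Suc 0) = 0"
  "bef True False [True, True, False] (Suc (Suc 0)) = 0"
  unfolding bef_def by (simp_all add: posl_Cons)

lemma TF_Suc: "TF (Suc k) = [True, False] @ TF k" by simp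

lemma bef_TF1: "1 \<le> j \<Longrightarrow> j \<le> k \<Longrightarrow> bef False True (TF k) j = j"
proof (induction k arbitrary: j)
  case 0 then show ?case by simp
next
  case (Suc k)
  show ?case
  proof (cases "j = 1")
    case True
    then show ?thesis unfolding TF_Suc using bef_app1[of j "[True, False]" False True "TF k"] bef_small
      by simp
  next
    case False
    then have "bef False True (TF (Suc k)) j = 1 + bef False True (TF k) (j - 1)"
      unfolding TF_Suc using bef_app2[of "[True, False]" False j "TF k" True] Suc.prems by simp
    then show ?thesis using Suc False by simp
  qed
qed

lemma bef_TF2: "1 \<le> j \<Longrightarrow> j \<le> k \<Longrightarrow> bef True False (TF k) j = j - 1"
proof (induction k arbitrary: j)
  case 0 then show ?case by simp
next
  case (Suc k)
  show ?case
  proof (cases "j = 1")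
    case True
    then show ?thesis unfolding TF_Suc using bef_app1[of j "[True, False]" True False "TF k"] bef_small
      by simp
  next
    case False
    then have "bef True False (TF (Suc k)) j = 1 + bef True False (TF k) (j - 1)"
      unfolding TF_Suc using bef_app2[of "[True, False]" True j "TF k" False] Suc.prems by simp
    then show ?thesis using Suc False by simp
  qed
qed

lemma dyck_Wl: "1 \<le> z \<Longrightarrow> z \<le> n + 1 \<Longrightarrow> dyck (n + 1) (Wl n z)"
  unfolding dyck_pok Wl_def by (simp add: length_concat sum_list_replicate)

lemma dyck_Wu: "1 \<le> z \<Longrightarrow> z \<le> n + 1 \<Longrightarrow> dyck (n + 1) (Wu n z)"
  unfolding dyck_pok Wu_def by (simp add: length_concat sum_list_replicate)


lemma mWl: assumes "1 \<le> z" "z \<le> n + 1" "1 \<le> i" "i \<le> n + 1"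
  shows "bef False True (Wl n z) i = (if i \<le> z then z else i)"
proof -
  have "bef False True (Wl n z) i = z + bef False True (replicate z False @ TF (n + 1 - z)) i"
    unfolding Wl_def using assms bef_app2[of "replicate z True" False i "replicate z False @ TF (n + 1 - z)" True]
    by simp
  also have "\<dots> = (if i \<le> z then z else i)"
  proof (cases "i \<le> z")
    case True
    then show ?thesis using assms bef_app1[of i "replicate z False" False True "TF (n + 1 - z)"] bef_rep[of False True z i]
      by simp
  next
    case False
    then show ?thesis using assms bef_app2[of "replicate z False" False i "TF (n + 1 - z)" True] bef_TF1[of "i - z" "n + 1 - z"]
      by simp
  qed
  finally show ?thesis .
qed

lemma dWl: assumes "1 \<le> z" "z \<le> n + 1" "1 \<le> k" "k \<le> n + 1"
  shows "bef True False (Wl n z) k = (if k \<le> z then 0 else k - 1)"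
proof (cases "k \<le> z")
  case True
  then show ?thesis unfolding Wl_def using assms bef_app1[of k "replicate z True" True False "replicate z False @ TF (n + 1 - z)"]
     bef_rep[of True False z k] by simp
next
  case False
  have "bef True False (Wl n z) k = bef True False (replicate z False @ TF (n + 1 - z)) (k - z)"
    unfolding Wl_def using assms False bef_app2[of "replicate z True" True k "replicate z False @ TF (n + 1 - z)" False]
    by simp
  also have "\<dots> = z + bef True False (TF (n + 1 - z)) (k - z)"
    using assms False bef_app2[of "replicate z False" True "k - z" "TF (n + 1 - z)" False] by simp
  also have "\<dots> = k - 1" using assms False bef_TF2[of "k - z" "n + 1 - z"] by simp
  finally show ?thesis using False by simp
qed

lemma mWu: assumes "1 \<le> z" "z \<le> n + 1" "1 \<le> i" "i \<le> n"
  shows "bef False True (Wu n z) i = (if i < z then i else i + 1)"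
proof (cases "i < z")
  case True
  then show ?thesis unfolding Wu_def using assms bef_app1[of i "TF (z - 1)" False True "[True] @ TF (n + 1 - z) @ [False]"]
     bef_TF1[of i "z - 1"] by simp
next
  case False
  have "bef False True (Wu n z) i = (z - 1) + bef False True ([True] @ TF (n + 1 - z) @ [False]) (i - (z - 1))"
    unfolding Wu_def using assms False bef_app2[of "TF (z - 1)" False i "[True] @ TF (n + 1 - z) @ [False]" True]
    by simp
  also have "\<dots> = (z - 1) + 1 + bef False True (TF (n + 1 - z) @ [False]) (i - (z - 1))"
    using assms False bef_app2[of "[True]" False "i - (z - 1)" "TF (n + 1 - z) @ [False]" True] by simp
  also have "\<dots> = (z - 1) + 1 + (i - (z - 1))"
    using assms False bef_app1[of "i - (z - 1)" "TF (n + 1 - z)" False True "[False]"] bef_TF1[of "i - (z - 1)" "n + 1 - z"]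
    by simp
  finally show ?thesis using False assms by simp
qed

lemma dWu: assumes "1 \<le> z" "z \<le> n + 1" "1 \<le> k" "k \<le> n + 1"
  shows "bef True False (Wu n z) k = (if k \<le> z then k - 1 else k - 2)"
proof (cases "k < z")
  case True
  then show ?thesis unfolding Wu_def using assms bef_app1[of k "TF (z - 1)" True False "[True] @ TF (n + 1 - z) @ [False]"]
     bef_TF2[of k "z - 1"] by simp
next
  case False
  have "bef True False (Wu n z) k = (z - 1) + bef True False ([True] @ TF (n + 1 - z) @ [False]) (k - (z - 1))"
    unfolding Wu_def using assms False bef_app2[of "TF (z - 1)" True k "[True] @ TF (n + 1 - z) @ [False]" False]
    by simp
  also have "\<dots> = (if k \<le> z then k - 1 else k - 2)"
  proof (cases "k = z")
    case True
    then show ?thesis using assms bef_app1[of 1 "[True]" True False "TF (n + 1 - z) @ [False]"] bef_single[of True False]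
      by simp
  next
    case False2: False
    have "bef True False ([True] @ TF (n + 1 - z) @ [False]) (k - (z - 1))
        = bef True False (TF (n + 1 - z) @ [False]) (k - z)"
      using assms False False2 bef_app2[of "[True]" True "k - (z - 1)" "TF (n + 1 - z) @ [False]" False]
      by (simp add: Suc_diff_le)
    also have "\<dots> = k - z - 1"
      using assms False False2 bef_app1[of "k - z" "TF (n + 1 - z)" True False "[False]"] bef_TF2[of "k - z" "n + 1 - z"]
      by simp
    finally show ?thesis using assms False False2 by simp
  qed
  finally show ?thesis .
qed



lemma ups_ge: assumes "dyck N w" "1 \<le> i" "i \<le> N"
  shows "i - 1 \<le> bef False True w i"
proof -
  have c: "count_list w False = N" and p: "pok 0 w" using assms(1) by (auto simp: dyck_pok)
  define p0 where "p0 = posl False w ! (i - 1)"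
  have "i - 1 < length (posl False w)" using c assms by simp
  then have "p0 < length w" unfolding p0_def using posl_lt nth_mem by blast
  then have "int (count_list (take p0 w) False) \<le> int (count_list (take p0 w) True)"
    using p unfolding pok_def by auto
  moreover have "count_list (take p0 w) False = i - 1"
    using bef_cc[of "i - 1" w False] c assms unfolding bef_def p0_def by simp
  ultimately show ?thesis unfolding bef_def p0_def by simp
qed

lemma vG_nth: "1 \<le> i \<Longrightarrow> i \<le> n \<Longrightarrow> vG n w ! (i - 1) = bef False True w i - (i - 1)"
proof -
  assume a: "1 \<le> i" "i \<le> n"
  have "[1..<n+1] ! (i - 1) = i" using a nth_upt[of 1 "i - 1" "n + 1"] by simp
  then show ?thesis unfolding vG_def ups_bef using a by (simp del: upt_Suc)
qed

lemma f_unique: assumes "dyck (n + 1) G" "dyck (n + 1) G0" "vG n G = vG n G0"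
  shows "G = G0"
proof (rule det)
  show "count_list G False = count_list G0 False" "count_list G True = count_list G0 True"
    using assms by (auto simp: dyck_pok)
  show "G \<noteq> [] \<longrightarrow> last G = False" "G0 \<noteq> [] \<longrightarrow> last G0 = False"
    using dyck_last assms by auto
  show "\<forall>i. 1 \<le> i \<longrightarrow> i < count_list G False \<longrightarrow> bef False True G i = bef False True G0 i"
  proof (intro allI impI)
    fix i assume i: "1 \<le> i" "i < count_list G False"
    then have i2: "i \<le> n" using assms by (simp add: dyck_pok)
    have "bef False True G i - (i - 1) = bef False True G0 i - (i - 1)"
      using vG_nth[OF i(1) i2, of G] vG_nth[OF i(1) i2, of G0] assms(3) by simp
    moreover have "i - 1 \<le> bef False True G i" "i - 1 \<le> bef False True G0 i"
      using ups_ge[OF assms(1) i(1)] ups_ge[OF assms(2) i(1)] i2 by auto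
    ultimately show "bef False True G i = bef False True G0 i" by simp
  qed
qed

lemma f_char: assumes "dyck (length u + 1) G0" "vG (length u) G0 = map (\<lambda>i. T_op i u) [1..<length u + 1]"
  shows "f_map u = G0"
  unfolding f_map_def
proof (rule the_equality)
  show "dyck (length u + 1) G0 \<and> vG (length u) G0 = map (\<lambda>i. T_op i u) [1..<length u + 1]" using assms by simp
  fix G assume "dyck (length u + 1) G \<and> vG (length u) G = map (\<lambda>i. T_op i u) [1..<length u + 1]"
  then show "G = G0" using f_unique assms by metis
qed

lemma vG_eq: "(\<And>i. 1 \<le> i \<Longrightarrow> i \<le> n \<Longrightarrow> bef False True w i - (i - 1) = h i) \<Longrightarrow> vG n w = map h [1..<n+1]"
  unfolding vG_def ups_bef by (rule map_cong) auto

lemma len_vlow[simp]: "length (v_low n z) = n" by (simp add: v_low_def)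
lemma len_vup[simp]: "length (v_up n z) = n" by (simp add: v_up_def)

lemma f_low: assumes "1 \<le> z" "z \<le> n + 1" shows "f_map (v_low n z) = Wl n z"
proof (rule f_char)
  show "dyck (length (v_low n z) + 1) (Wl n z)" using dyck_Wl assms by simp
  show "vG (length (v_low n z)) (Wl n z) = map (\<lambda>i. T_op i (v_low n z)) [1..<length (v_low n z) + 1]"
    unfolding len_vlow by (rule vG_eq) (use assms in \<open>simp add: mWl T_low\<close>)
qed

lemma f_up: assumes "1 \<le> z" "z \<le> n + 1" shows "f_map (v_up n z) = Wu n z"
proof (rule f_char)
  show "dyck (length (v_up n z) + 1) (Wu n z)" using dyck_Wu assms by simp
  show "vG (length (v_up n z)) (Wu n z) = map (\<lambda>i. T_op i (v_up n z)) [1..<length (v_up n z) + 1]"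
    unfolding len_vup by (rule vG_eq) (use assms in \<open>simp add: mWu T_up\<close>)
qed



lemma upt_split3: "a \<le> b \<Longrightarrow> b \<le> c \<Longrightarrow> [a..<c] = [a..<b] @ [b..<c]"
  by (metis le_add_diff_inverse upt_add_eq_append)

lemma S1: assumes "1 \<le> m" "rest \<noteq> []"
  shows "g_step (m - 1) (D, [0..<m] @ y # rest) = (insert {m - 1, hd rest} D, [0..<m] @ rest)"
proof -
  have a: "([0..<m] @ y # rest) ! (m - 1) = m - 1" using assms by (simp add: nth_append)
  have b: "([0..<m] @ y # rest) ! (m - 1 + 2) = hd rest" using assms by (simp add: nth_append hd_conv_nth)
  have c: "take (m - 1 + 1) ([0..<m] @ y # rest) @ drop (m - 1 + 2) ([0..<m] @ y # rest) = [0..<m] @ rest"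
    using assms by simp
  show ?thesis unfolding g_step_def using a b c by simp
qed

lemma stepA_gen: assumes "1 \<le> j" "j \<le> m" "rest \<noteq> []"
  shows "fold g_step (map (\<lambda>i. m - i) [1..<j+1]) (D, [0..<m] @ y # rest)
     = (D \<union> {{k, hd rest} | k. m - j \<le> k \<and> k < m}, [0..<m - j + 1] @ rest)"
  using assms
proof (induction j rule: nat_induct_at_least)
  case base
  have "g_step (m - 1) (D, [0..<m] @ y # rest) = (insert {m - 1, hd rest} D, [0..<m] @ rest)"
    using S1 base by simp
  moreover have "{{k, hd rest} | k. m - 1 \<le> k \<and> k < m} = {{m - 1, hd rest}}" using base by auto
  ultimately show ?case using base by simp
next
  case (Suc j)
  have s: "[1..<Suc j + 1] = [1..<j+1] @ [j+1]" by simp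
  have e: "[0..<m - j + 1] @ rest = [0..<m - j] @ (m - j) # rest" using Suc by simp
  have "g_step (m - j - 1) (D \<union> {{k, hd rest} | k. m - j \<le> k \<and> k < m}, [0..<m - j] @ (m - j) # rest)
     = (insert {m - j - 1, hd rest} (D \<union> {{k, hd rest} | k. m - j \<le> k \<and> k < m}), [0..<m - j] @ rest)"
    using S1[of "m - j" rest] Suc by simp
  moreover have "insert {m - j - 1, hd rest} (D \<union> {{k, hd rest} | k. m - j \<le> k \<and> k < m})
      = D \<union> {{k, hd rest} | k. m - Suc j \<le> k \<and> k < m}" using Suc by auto
  moreover have "m - j = m - Suc j + 1" using Suc by simp
  ultimately show ?case unfolding s using Suc e by (simp add: diff_diff_add)
qed

lemma stepA: assumes "j \<le> m" "rest \<noteq> []"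
  shows "fold g_step (map (\<lambda>i. m - i) [1..<j+1]) (D, [0..<m + 1] @ rest)
     = (D \<union> {{k, hd rest} | k. m - j \<le> k \<and> k < m}, [0..<m - j + 1] @ rest)"
proof (cases "j = 0")
  case True then show ?thesis by auto
next
  case False
  have "[0..<m + 1] @ rest = [0..<m] @ m # rest" by simp
  then show ?thesis using stepA_gen[of j m rest D m] False assms by simp
qed

lemma S3: assumes "a + 1 < b"
  shows "g_step 0 (D, 0 # [a..<b] @ rest) = (insert {0, Suc a} D, 0 # [Suc a..<b] @ rest)"
proof -
  have "[a..<b] = a # Suc a # [Suc (Suc a)..<b]" using assms by (simp add: upt_conv_Cons)
  moreover have "[Suc a..<b] = Suc a # [Suc (Suc a)..<b]" using assms by (simp add: upt_conv_Cons)
  ultimately show ?thesis unfolding g_step_def by simp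
qed

lemma stepC: "a + j < b \<Longrightarrow> fold g_step (replicate j 0) (D, 0 # [a..<b] @ rest)
   = (D \<union> {{0, k} | k. a < k \<and> k \<le> a + j}, 0 # [a + j..<b] @ rest)"
proof (induction j arbitrary: a D)
  case 0 then show ?case by auto
next
  case (Suc j)
  have "fold g_step (replicate (Suc j) 0) (D, 0 # [a..<b] @ rest)
      = fold g_step (replicate j 0) (insert {0, Suc a} D, 0 # [Suc a..<b] @ rest)"
    using S3[of a b D rest] Suc.prems by simp
  also have "\<dots> = (insert {0, Suc a} D \<union> {{0, k} | k. Suc a < k \<and> k \<le> Suc a + j}, 0 # [Suc a + j..<b] @ rest)"
    using Suc by simp
  also have "insert {0, Suc a} D \<union> {{0, k} | k. Suc a < k \<and> k \<le> Suc a + j} = D \<union> {{0, k} | k. a < k \<and> k \<le> a + Suc j}"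
    by auto
  finally show ?case by simp
qed



lemma lam_eq: "(\<And>i. 1 \<le> i \<Longrightarrow> i \<le> n \<Longrightarrow> bef True False w (n + 2 - i) = h i) \<Longrightarrow> lambdaG n w = map h [1..<n+1]"
  unfolding lambdaG_def Ds_bef by (rule map_cong) auto

lemma lam_Wl: assumes "1 \<le> z" "z \<le> n + 1"
  shows "lambdaG n (Wl n z) = map (\<lambda>i. (n + 1) - i) [1..<(n + 1 - z) + 1] @ replicate (z - 1) 0"
proof -
  have "lambdaG n (Wl n z) = map (\<lambda>i. if i \<le> n + 1 - z then n + 1 - i else 0) [1..<n+1]"
    by (rule lam_eq) (use assms in \<open>auto simp: dWl\<close>)
  also have "[1..<n+1] = [1..<(n + 1 - z) + 1] @ [(n + 1 - z) + 1..<n+1]"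
    using assms by (intro upt_split3) auto
  also have "map (\<lambda>i. if i \<le> n + 1 - z then n + 1 - i else 0) ([1..<(n + 1 - z) + 1] @ [(n + 1 - z) + 1..<n+1])
     = map (\<lambda>i. (n + 1) - i) [1..<(n + 1 - z) + 1] @ replicate (z - 1) 0"
  proof -
    have "map (\<lambda>i. if i \<le> n + 1 - z then n + 1 - i else 0) [(n + 1 - z) + 1..<n+1] = replicate (z - 1) 0"
      using assms by (intro nth_equalityI) (auto simp del: upt_Suc simp: nth_upt)
    moreover have "map (\<lambda>i. if i \<le> n + 1 - z then n + 1 - i else 0) [1..<(n + 1 - z) + 1] = map (\<lambda>i. (n + 1) - i) [1..<(n + 1 - z) + 1]"
      by (rule map_cong) (auto simp del: upt_Suc)
    ultimately show ?thesis by (simp del: upt_Suc)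
  qed
  finally show ?thesis .
qed

lemma lam_Wu: assumes "1 \<le> z" "z \<le> n + 1"
  shows "lambdaG n (Wu n z) = map (\<lambda>i. n - i) [1..<(n + 1 - z) + 1] @ map (\<lambda>i. z - i) [1..<(z - 1) + 1]"
proof -
  have "lambdaG n (Wu n z) = map (\<lambda>i. if i \<le> n + 1 - z then n - i else n + 1 - i) [1..<n+1]"
    by (rule lam_eq) (use assms in \<open>auto simp: dWu\<close>)
  also have "[1..<n+1] = [1..<(n + 1 - z) + 1] @ [(n + 1 - z) + 1..<n+1]"
    using assms by (intro upt_split3) auto
  also have "map (\<lambda>i. if i \<le> n + 1 - z then n - i else n + 1 - i) ([1..<(n + 1 - z) + 1] @ [(n + 1 - z) + 1..<n+1])
     = map (\<lambda>i. n - i) [1..<(n + 1 - z) + 1] @ map (\<lambda>i. n + 1 - i) [(n + 1 - z) + 1..<n+1]"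
    by auto
  also have "map (\<lambda>i. n + 1 - i) [(n + 1 - z) + 1..<n+1] = map (\<lambda>i. z - i) [1..<(z - 1) + 1]"
    using assms by (intro nth_equalityI) (auto simp del: upt_Suc simp: nth_upt)
  finally show ?thesis .
qed

lemma g_low: assumes "1 \<le> z" "z \<le> n + 1"
  shows "g_map n (Wl n z) = {{k, n + 2} | k. z \<le> k \<and> k < n + 1} \<union> {{0, k} | k. 1 < k \<and> k \<le> z}"
proof -
  have st: "[0..<n + 3] = [0..<(n + 1) + 1] @ [n + 2]" by (simp add: numeral_3_eq_3)
  have "fold g_step (map (\<lambda>i. (n + 1) - i) [1..<(n + 1 - z) + 1]) ({}, [0..<(n + 1) + 1] @ [n + 2])
    = ({} \<union> {{k, n + 2} | k. (n + 1) - (n + 1 - z) \<le> k \<and> k < n + 1}, [0..<(n + 1) - (n + 1 - z) + 1] @ [n + 2])"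
    using stepA[of "n + 1 - z" "n + 1" "[n + 2]" "{}"] assms by simp
  also have "[0..<(n + 1) - (n + 1 - z) + 1] @ [n + 2] = 0 # [1..<z + 1] @ [n + 2]"
    using assms by (simp add: upt_conv_Cons)
  finally have p1: "fold g_step (map (\<lambda>i. (n + 1) - i) [1..<(n + 1 - z) + 1]) ({}, [0..<n + 3])
     = ({{k, n + 2} | k. z \<le> k \<and> k < n + 1}, 0 # [1..<z + 1] @ [n + 2])"
    using assms st by simp
  have p2: "fold g_step (replicate (z - 1) 0) ({{k, n + 2} | k. z \<le> k \<and> k < n + 1}, 0 # [1..<z + 1] @ [n + 2])
     = ({{k, n + 2} | k. z \<le> k \<and> k < n + 1} \<union> {{0, k} | k. 1 < k \<and> k \<le> 1 + (z - 1)}, 0 # [1 + (z - 1)..<z + 1] @ [n + 2])"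
    using stepC[of 1 "z - 1" "z + 1"] assms by simp
  show ?thesis unfolding g_map_def lam_Wl[OF assms] fold_append
    using p1 p2 assms by simp
qed

lemma g_up: assumes "1 \<le> z" "z \<le> n + 1"
  shows "g_map n (Wu n z) = {{k, n + 1} | k. z - 1 \<le> k \<and> k < n} \<union> {{k, n + 2} | k. 1 \<le> k \<and> k < z}"
proof -
  have st: "[0..<n + 3] = [0..<n + 1] @ [n + 1, n + 2]" by (simp add: numeral_3_eq_3)
  have "fold g_step (map (\<lambda>i. n - i) [1..<(n + 1 - z) + 1]) ({}, [0..<n + 1] @ [n + 1, n + 2])
    = ({} \<union> {{k, n + 1} | k. n - (n + 1 - z) \<le> k \<and> k < n}, [0..<n - (n + 1 - z) + 1] @ [n + 1, n + 2])"
    using stepA[of "n + 1 - z" n "[n + 1, n + 2]" "{}"] assms by simp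
  then have p1: "fold g_step (map (\<lambda>i. n - i) [1..<(n + 1 - z) + 1]) ({}, [0..<n + 3])
     = ({{k, n + 1} | k. z - 1 \<le> k \<and> k < n}, [0..<z] @ [n + 1, n + 2])"
    using assms st by (simp add: Suc_diff_le)
  show ?thesis
  proof (cases "z = 1")
    case True
    then show ?thesis unfolding g_map_def lam_Wu[OF assms] fold_append using p1 by auto
  next
    case False
    have p2: "fold g_step (map (\<lambda>i. z - i) [1..<(z - 1) + 1]) ({{k, n + 1} | k. z - 1 \<le> k \<and> k < n}, [0..<z] @ (n + 1) # [n + 2])
      = ({{k, n + 1} | k. z - 1 \<le> k \<and> k < n} \<union> {{k, hd [n + 2]} | k. z - (z - 1) \<le> k \<and> k < z}, [0..<z - (z - 1) + 1] @ [n + 2])"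
      using stepA_gen[of "z - 1" z "[n + 2]"] assms False by simp
    show ?thesis unfolding g_map_def lam_Wu[OF assms] fold_append
      using p1 p2 assms False by simp
  qed
qed

lemma rot_pair: "rot_label n ` {a, b} = {rot_label n a, rot_label n b}" by simp

theorem lemma18:
  fixes n z :: nat
  assumes "1 \<le> n" and "1 \<le> z" and "z \<le> n + 1"
  shows "F_map (v_up n z) = (\<lambda>e. rot_label n ` e) ` F_map (v_low n z)"
proof -
  have up: "F_map (v_up n z) = {{k, n + 1} | k. z - 1 \<le> k \<and> k < n} \<union> {{k, n + 2} | k. 1 \<le> k \<and> k < z}"
    unfolding F_map_def using f_up g_up assms by simp
  have low: "F_map (v_low n z) = {{k, n + 2} | k. z \<le> k \<and> k < n + 1} \<union> {{0, k} | k. 1 < k \<and> k \<le> z}"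
    unfolding F_map_def using f_low g_low assms by simp
  show ?thesis unfolding up low
  proof (rule set_eqI, rule iffI)
    fix x assume "x \<in> {{k, n + 1} | k. z - 1 \<le> k \<and> k < n} \<union> {{k, n + 2} | k. 1 \<le> k \<and> k < z}"
    then show "x \<in> (\<lambda>e. rot_label n ` e) ` ({{k, n + 2} | k. z \<le> k \<and> k < n + 1} \<union> {{0, k} | k. 1 < k \<and> k \<le> z})"
    proof
      assume "x \<in> {{k, n + 1} | k. z - 1 \<le> k \<and> k < n}"
      then obtain k where k: "x = {k, n + 1}" "z - 1 \<le> k" "k < n" by auto
      have "rot_label n ` {k + 1, n + 2} = x" using k by (simp add: rot_label_def)
      moreover have "{k + 1, n + 2} \<in> {{k, n + 2} | k. z \<le> k \<and> k < n + 1}" using k assms by auto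
      ultimately show ?thesis by blast
    next
      assume "x \<in> {{k, n + 2} | k. 1 \<le> k \<and> k < z}"
      then obtain k where k: "x = {k, n + 2}" "1 \<le> k" "k < z" by auto
      have "rot_label n ` {0, k + 1} = x" using k by (auto simp: rot_label_def)
      moreover have "{0, k + 1} \<in> {{0, k} | k. 1 < k \<and> k \<le> z}" using k assms by auto
      ultimately show ?thesis by blast
    qed
  next
    fix x assume "x \<in> (\<lambda>e. rot_label n ` e) ` ({{k, n + 2} | k. z \<le> k \<and> k < n + 1} \<union> {{0, k} | k. 1 < k \<and> k \<le> z})"
    then obtain e where e: "x = rot_label n ` e" "e \<in> {{k, n + 2} | k. z \<le> k \<and> k < n + 1} \<union> {{0, k} | k. 1 < k \<and> k \<le> z}"
      by blast
    from e(2) show "x \<in> {{k, n + 1} | k. z - 1 \<le> k \<and> k < n} \<union> {{k, n + 2} | k. 1 \<le> k \<and> k < z}"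
    proof
      assume "e \<in> {{k, n + 2} | k. z \<le> k \<and> k < n + 1}"
      then obtain k where k: "e = {k, n + 2}" "z \<le> k" "k < n + 1" by auto
      have "x = {k - 1, n + 1}" using k e(1) assms by (simp add: rot_label_def)
      then show ?thesis using k assms by auto
    next
      assume "e \<in> {{0, k} | k. 1 < k \<and> k \<le> z}"
      then obtain k where k: "e = {0, k}" "1 < k" "k \<le> z" by auto
      have "x = {k - 1, n + 2}" using k e(1) assms by (auto simp: rot_label_def)
      then show ?thesis using k assms by auto
    qed
  qed
qed

end
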